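(* Let $n=p_1p_2$, where $p_1,p_2$ are distinct primes. For $i=1,2$ let $s_i,t_i$ be positive integers with $s_it_i=p_i-1$ and let $g_i$ be a generator of $\mathbb{Z}_{p_i}^\times$. Let $d=\gcd(s_1,s_2)$. Let $e$ be an integer satisfying $$e\equiv g_1^{t_1}\pmod{p_1},\qquad e\equiv g_2^{t_2}\pmod{p_2},$$ and let $G=\langle e\rangle$ be the subgroup of $\mathbb{Z}_n^\times$ generated by $e$. Then the coset index function $f_G$ is a $(p_1p_2,\ 1+t_1+t_2+dt_1t_2,\ \{a_0,a_1,a_2\})$ zero-difference function, where $$a_0=\frac{1}{d}(s_1s_2-s_1-s_2)+1,\qquad a_1=\frac{(p_1-1)s_2}{d}-p_1+s_2,\qquad a_2=\frac{(p_2-1)s_1}{d}-p_2+s_1.$$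
   Context: For a subgroup $G$ of $\mathbb{Z}_n^\times$ and $r\in\mathbb{Z}_n$, the coset $rG=\{rg\mid g\in G\}$; these cosets partition $\mathbb{Z}_n$, forming a set $D_G$. The coset index function induced by $G$ is $f_G:\mathbb{Z}_n\to\mathbb{Z}_{|D_G|}$, $f_G(x)=h_G(C_x)$, where $C_x$ is the coset containing $x$ and $h_G:D_G\to\mathbb{Z}_{|D_G|}$ is a fixed bijection. A function $f:A\to B$ between finite abelian groups is an $(n,m,S)$ zero-difference function if $n=|A|$, $m=|f(A)|$, and for every nonzero $a\in A$, $|\{x\in A\mid f(x+a)=f(x)\}|\in S$. Here $A=(\mathbb{Z}_n,+)$. *)

theory Defs
  imports "HOL-Number_Theory.Number_Theory"
begin

text \<open>Z_n is represented by the integers 0..n-1 with arithmetic mod n.\<close>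

definition units_mod :: "nat \<Rightarrow> int set" where
  "units_mod n = {x. 0 \<le> x \<and> x < int n \<and> coprime x (int n)}"

definition cyc_subgroup :: "nat \<Rightarrow> int \<Rightarrow> int set" where
  "cyc_subgroup n e = {(e ^ k) mod int n | k. True}"

definition coset_mod :: "nat \<Rightarrow> int set \<Rightarrow> int \<Rightarrow> int set" where
  "coset_mod n G r = {(r * g) mod int n | g. g \<in> G}"

definition coset_family :: "nat \<Rightarrow> int set \<Rightarrow> int set set" where
  "coset_family n G = coset_mod n G ` {0..<int n}"

definition coset_index_fn :: "nat \<Rightarrow> int set \<Rightarrow> (int set \<Rightarrow> nat) \<Rightarrow> int \<Rightarrow> nat" where
  "coset_index_fn n G h x = h (THE C. C \<in> coset_family n G \<and> x \<in> C)"

definition zd_function :: "nat \<Rightarrow> (int \<Rightarrow> 'b) \<Rightarrow> nat \<Rightarrow> int set \<Rightarrow> bool" where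
  "zd_function n f m S \<longleftrightarrow>
     card (f ` {0..<int n}) = m \<and>
     (\<forall>a \<in> {1..<int n}. int (card {x \<in> {0..<int n}. f ((x + a) mod int n) = f x}) \<in> S)"

end

theory Submission
  imports Defs
begin
lemma card_eq_rel:
  assumes "finite B"
    and "\<And>x. x \<in> A \<Longrightarrow> \<exists>!y. y \<in> B \<and> R x y"
    and "\<And>y. y \<in> B \<Longrightarrow> \<exists>!x. x \<in> A \<and> R x y"
  shows "card A = card B"
proof -
  define f where "f x = (THE y. y \<in> B \<and> R x y)" for x
  have f: "f x \<in> B \<and> R x (f x)" if "x \<in> A" for x
    using theI'[OF assms(2)[OF that]] unfolding f_def by blast
  have "bij_betw f A B"
    unfolding bij_betw_def
  proof
    show "inj_on f A"
    proof (rule inj_onI)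
      fix x y assume xy: "x \<in> A" "y \<in> A" "f x = f y"
      then show "x = y" using f[OF xy(1)] f[OF xy(2)] assms(3)[of "f x"] by metis
    qed
    show "f ` A = B"
    proof
      show "f ` A \<subseteq> B" using f by auto
      show "B \<subseteq> f ` A"
      proof
        fix y assume y: "y \<in> B"
        then obtain x where x: "x \<in> A" "R x y" using assms(3) by blast
        have "f x = y" using f[OF x(1)] assms(2)[OF x(1)] x y by blast
        then show "y \<in> f ` A" using x by blast
      qed
    qed
  qed
  then show ?thesis by (rule bij_betw_same_card)
qed

lemma prime_cancel:
  fixes p :: nat and x a b :: int
  assumes "prime p" "\<not> int p dvd x"
  shows "[x * a = x * b] (mod int p) \<longleftrightarrow> [a = b] (mod int p)"
proof -
  have "coprime x (int p)"
    using assms by (metis coprime_commute prime_imp_coprime prime_nat_int_transfer)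
  then show ?thesis by (rule cong_mult_lcancel)
qed

lemma exp_cong:
  fixes p s t g :: nat and e :: int
  assumes p: "prime p" and st: "s * t = p - 1" and r: "residue_primroot p g"
    and c: "[e = int g ^ t] (mod int p)"
  shows "[e ^ k = e ^ j] (mod int p) \<longleftrightarrow> [k = j] (mod s)"
proof -
  have t0: "t > 0" using st p prime_gt_1_nat by (metis gr0I less_numeral_extra(3) mult_0_right zero_less_diff)
  have cp: "coprime p g" using r by (simp add: residue_primroot_def)
  have o: "ord p g = t * s" using r p by (simp add: residue_primroot_def totient_prime st mult.commute)
  have ek: "[e ^ k = int (g ^ (t * k))] (mod int p)" for k
    using cong_pow[OF c, of k] by (simp add: power_mult)
  have "[e ^ k = e ^ j] (mod int p) \<longleftrightarrow> [int (g ^ (t * k)) = int (g ^ (t * j))] (mod int p)"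
    using ek[of k] ek[of j] by (meson cong_sym cong_trans)
  also have "\<dots> \<longleftrightarrow> [g ^ (t * k) = g ^ (t * j)] (mod p)"
    by (rule cong_int_iff)
  also have "\<dots> \<longleftrightarrow> [t * k = t * j] (mod t * s)"
    using order_divides_expdiff[OF cp] o by simp
  also have "\<dots> \<longleftrightarrow> [k = j] (mod s)"
    unfolding cong_def using t0 by (simp add: mod_mult_mult1)
  finally show ?thesis .
qed

lemma exp_not_dvd:
  fixes p t g :: nat and e :: int
  assumes p: "prime p" and r: "residue_primroot p g"
    and c: "[e = int g ^ t] (mod int p)"
  shows "\<not> int p dvd e"
proof
  assume "int p dvd e"
  then have "int p dvd int g ^ t" using c by (meson cong_dvd_iff)
  then have "p dvd g ^ t" by (metis of_nat_dvd_iff of_nat_power)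
  then have "p dvd g" using p prime_dvd_power by blast
  moreover have "coprime p g" using r by (simp add: residue_primroot_def)
  ultimately show False using p by (metis coprime_absorb_left not_prime_unit)
qed

lemma solve_coprime:
  fixes A M a :: int
  assumes "coprime A M"
  shows "\<exists>x. [x * A = a] (mod M)"
  using cong_solve_dvd_int[of A M a] assms by (auto simp: mult.commute)

locale zd =
  fixes p1 p2 s1 s2 t1 t2 g1 g2 :: nat and e :: int
  assumes p1: "prime p1" and p2: "prime p2" and neq: "p1 \<noteq> p2"
    and s1: "s1 > 0" and t1: "t1 > 0" and st1: "s1 * t1 = p1 - 1"
    and s2: "s2 > 0" and t2: "t2 > 0" and st2: "s2 * t2 = p2 - 1"
    and r1: "residue_primroot p1 g1" and r2: "residue_primroot p2 g2"
    and c1: "[e = int g1 ^ t1] (mod int p1)" and c2: "[e = int g2 ^ t2] (mod int p2)"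
begin

abbreviation "P \<equiv> int p1"
abbreviation "Q \<equiv> int p2"
definition "L = lcm s1 s2"

lemma P1: "P > 1" using p1 prime_gt_1_nat by simp
lemma Q1: "Q > 1" using p2 prime_gt_1_nat by simp
lemma L0: "L > 0" using s1 s2 by (simp add: L_def lcm_pos_nat)

lemma E1: "[e ^ k = e ^ j] (mod P) \<longleftrightarrow> [k = j] (mod s1)"
  using exp_cong[OF p1 st1 r1 c1] .
lemma E2: "[e ^ k = e ^ j] (mod Q) \<longleftrightarrow> [k = j] (mod s2)"
  using exp_cong[OF p2 st2 r2 c2] .
lemma nPe: "\<not> P dvd e" using exp_not_dvd[OF p1 r1 c1] .
lemma nQe: "\<not> Q dvd e" using exp_not_dvd[OF p2 r2 c2] .

lemma copPQ: "coprime P Q"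
  using p1 p2 neq by (simp add: primes_coprime)

lemma congN: "[a = b] (mod P * Q) \<longleftrightarrow> [a = b] (mod P) \<and> [a = b] (mod Q)"
  using copPQ coprime_cong_mult cong_modulus_mult by (metis mult.commute)

lemma cancelP: "\<not> P dvd x \<Longrightarrow> [x * a = x * b] (mod P) \<longleftrightarrow> [a = b] (mod P)"
  using prime_cancel[OF p1] .
lemma cancelQ: "\<not> Q dvd x \<Longrightarrow> [x * a = x * b] (mod Q) \<longleftrightarrow> [a = b] (mod Q)"
  using prime_cancel[OF p2] .

lemma lcm_cong: "[k = j] (mod s1) \<and> [k = j] (mod s2) \<longleftrightarrow> [k = j] (mod L)"
  unfolding L_def
  by (meson cong_cong_lcm_nat cong_dvd_modulus_nat dvd_lcm1 dvd_lcm2)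

lemma EN: "[e ^ k = e ^ j] (mod P * Q) \<longleftrightarrow> [k = j] (mod L)"
  using congN E1 E2 lcm_cong by blast

lemma E1one: "[e ^ k = 1] (mod P) \<longleftrightarrow> s1 dvd k"
  using E1[of k 0] by (simp add: cong_0_iff)
lemma E2one: "[e ^ k = 1] (mod Q) \<longleftrightarrow> s2 dvd k"
  using E2[of k 0] by (simp add: cong_0_iff)

lemma primeP: "prime P" using p1 by simp
lemma primeQ: "prime Q" using p2 by simp

lemma ndvd_e_pow: "\<not> P dvd e ^ k" "\<not> Q dvd e ^ k"
  using nPe nQe primeP primeQ prime_dvd_power by blast+

lemma eq_mod_N: "0 \<le> x \<Longrightarrow> x < P * Q \<Longrightarrow> 0 \<le> y \<Longrightarrow> y < P * Q \<Longrightarrow>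
   [x = y] (mod P) \<Longrightarrow> [x = y] (mod Q) \<Longrightarrow> x = y"
  using congN cong_less_imp_eq_int by blast

end

context zd begin

definition "orb x = {(x * e ^ k) mod (P * Q) | k. True}"

lemma N1: "P * Q > 1" using P1 Q1 by (smt (verit) mult_less_cancel_left1)

lemma coset_eq: "coset_mod (p1 * p2) (cyc_subgroup (p1 * p2) e) x = orb x"
  unfolding coset_mod_def cyc_subgroup_def orb_def
  by (auto simp: mod_mult_right_eq) (metis mod_mult_right_eq)

lemma in_orb: "y \<in> orb x \<longleftrightarrow> (\<exists>k. y = (x * e ^ k) mod (P * Q))"
  unfolding orb_def by auto

lemma orb_self: "0 \<le> x \<Longrightarrow> x < P * Q \<Longrightarrow> x \<in> orb x"
  unfolding in_orb by (rule exI[of _ 0]) simp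

lemma orb_range: "orb x \<subseteq> {0..<P * Q}"
  using N1 unfolding orb_def by auto

lemma orb_sub: "y \<in> orb x \<Longrightarrow> orb y \<subseteq> orb x"
proof
  fix z assume "y \<in> orb x" "z \<in> orb y"
  then obtain k j where k: "y = (x * e ^ k) mod (P * Q)" and j: "z = (y * e ^ j) mod (P * Q)"
    unfolding in_orb by blast
  have "z = (x * e ^ (k + j)) mod (P * Q)"
    unfolding j k by (simp add: mod_mult_left_eq power_add mult.assoc)
  then show "z \<in> orb x" unfolding in_orb by blast
qed

lemma orb_back: assumes "0 \<le> x" "x < P * Q" "y \<in> orb x" shows "x \<in> orb y"
proof -
  obtain k where k: "y = (x * e ^ k) mod (P * Q)" using assms(3) unfolding in_orb by blast
  have "[e ^ (k * L) = e ^ 0] (mod P * Q)" unfolding EN by (simp add: cong_0_iff)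
  then have "[x * e ^ (k * L) = x * 1] (mod P * Q)" using cong_scalar_left by fastforce
  then have "(x * e ^ (k * L)) mod (P * Q) = x" using assms(1,2) by (simp add: cong_def)
  moreover have "k * L = k + k * (L - 1)" using L0 by (cases L) auto
  ultimately have "x = (y * e ^ (k * (L - 1))) mod (P * Q)"
    unfolding k by (simp add: mod_mult_left_eq power_add mult.assoc)
  then show ?thesis unfolding in_orb by blast
qed

lemma orb_eq: "0 \<le> x \<Longrightarrow> x < P * Q \<Longrightarrow> y \<in> orb x \<Longrightarrow> orb y = orb x"
  using orb_sub orb_back by blast

lemma orb_eq_iff: "0 \<le> x \<Longrightarrow> x < P * Q \<Longrightarrow> 0 \<le> y \<Longrightarrow> y < P * Q \<Longrightarrow> orb y = orb x \<longleftrightarrow> y \<in> orb x"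
  using orb_eq orb_self by blast

lemma family_eq: "coset_family (p1 * p2) (cyc_subgroup (p1 * p2) e) = orb ` {0..<P * Q}"
  unfolding coset_family_def by (simp add: coset_eq)

lemma index_fn: assumes "0 \<le> x" "x < P * Q"
  shows "coset_index_fn (p1 * p2) (cyc_subgroup (p1 * p2) e) h x = h (orb x)"
proof -
  have "(THE C. C \<in> orb ` {0..<P * Q} \<and> x \<in> C) = orb x"
  proof (rule the_equality)
    show "orb x \<in> orb ` {0..<P * Q} \<and> x \<in> orb x" using assms orb_self by auto
    fix C assume "C \<in> orb ` {0..<P * Q} \<and> x \<in> C"
    then obtain r where r: "r \<in> {0..<P * Q}" "C = orb r" "x \<in> orb r" by blast
    then show "C = orb x" using orb_eq[of r x] by auto
  qed
  then show ?thesis unfolding coset_index_fn_def family_eq by simp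
qed

end

context zd begin

lemma orb_cong: "[x * e ^ k = x * e ^ j] (mod P * Q) \<longleftrightarrow>
   (P dvd x \<or> [k = j] (mod s1)) \<and> (Q dvd x \<or> [k = j] (mod s2))"
proof -
  have a: "[x * e ^ k = x * e ^ j] (mod P) \<longleftrightarrow> (P dvd x \<or> [k = j] (mod s1))"
  proof (cases "P dvd x")
    case True
    then have "[x * e ^ k = 0] (mod P)" "[x * e ^ j = 0] (mod P)" by (auto simp: cong_0_iff)
    then show ?thesis using True by (meson cong_sym cong_trans)
  qed (simp add: cancelP E1)
  have b: "[x * e ^ k = x * e ^ j] (mod Q) \<longleftrightarrow> (Q dvd x \<or> [k = j] (mod s2))"
  proof (cases "Q dvd x")
    case True
    then have "[x * e ^ k = 0] (mod Q)" "[x * e ^ j = 0] (mod Q)" by (auto simp: cong_0_iff)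
    then show ?thesis using True by (meson cong_sym cong_trans)
  qed (simp add: cancelQ E2)
  show ?thesis using a b congN by blast
qed

lemma orb_card:
  assumes c: "c > 0" and h: "\<And>k j. [x * e ^ k = x * e ^ j] (mod P * Q) \<longleftrightarrow> [k = j] (mod c)"
  shows "card (orb x) = c"
proof -
  have "orb x = (\<lambda>k. (x * e ^ k) mod (P * Q)) ` {..<c}"
  proof
    show "orb x \<subseteq> (\<lambda>k. (x * e ^ k) mod (P * Q)) ` {..<c}"
    proof
      fix y assume "y \<in> orb x"
      then obtain k where k: "y = (x * e ^ k) mod (P * Q)" unfolding in_orb by blast
      have "[k = k mod c] (mod c)" by (simp add: cong_def)
      then have "y = (x * e ^ (k mod c)) mod (P * Q)" unfolding k using h cong_def by blast
      then show "y \<in> (\<lambda>k. (x * e ^ k) mod (P * Q)) ` {..<c}" using c by auto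
    qed
  qed (auto simp: in_orb)
  moreover have "inj_on (\<lambda>k. (x * e ^ k) mod (P * Q)) {..<c}"
  proof (rule inj_onI)
    fix k j assume "k \<in> {..<c}" "j \<in> {..<c}" "(x * e ^ k) mod (P * Q) = (x * e ^ j) mod (P * Q)"
    then show "k = j" using h[of k j] by (simp add: cong_def)
  qed
  ultimately show ?thesis by (simp add: card_image)
qed

lemma orb_dvdP: "y \<in> orb x \<Longrightarrow> P dvd y \<longleftrightarrow> P dvd x"
proof -
  assume "y \<in> orb x"
  then obtain k where k: "y = (x * e ^ k) mod (P * Q)" unfolding in_orb by blast
  have "P dvd y \<longleftrightarrow> P dvd x * e ^ k" unfolding k by (simp add: dvd_mod_iff)
  also have "\<dots> \<longleftrightarrow> P dvd x" using primeP ndvd_e_pow(1)[of k] by (meson dvd_mult2 prime_dvd_mult_iff)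
  finally show ?thesis .
qed

lemma orb_dvdQ: "y \<in> orb x \<Longrightarrow> Q dvd y \<longleftrightarrow> Q dvd x"
proof -
  assume "y \<in> orb x"
  then obtain k where k: "y = (x * e ^ k) mod (P * Q)" unfolding in_orb by blast
  have "Q dvd y \<longleftrightarrow> Q dvd x * e ^ k" unfolding k by (simp add: dvd_mod_iff)
  also have "\<dots> \<longleftrightarrow> Q dvd x" using primeQ ndvd_e_pow(2)[of k] by (meson dvd_mult2 prime_dvd_mult_iff)
  finally show ?thesis .
qed

definition "T b1 b2 = {x \<in> {0..<P * Q}. P dvd x = b1 \<and> Q dvd x = b2}"

lemma T_closed: "x \<in> T b1 b2 \<Longrightarrow> orb x \<subseteq> T b1 b2"
  unfolding T_def using orb_range orb_dvdP orb_dvdQ by blast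

lemma count_orbits:
  assumes "\<And>x. x \<in> T b1 b2 \<Longrightarrow> card (orb x) = c"
  shows "c * card (orb ` T b1 b2) = card (T b1 b2)"
proof -
  have fin: "finite (T b1 b2)" unfolding T_def by (rule finite_subset[of _ "{0..<P*Q}"]) auto
  have U: "\<Union> (orb ` T b1 b2) = T b1 b2"
  proof
    show "\<Union> (orb ` T b1 b2) \<subseteq> T b1 b2" using T_closed by blast
    show "T b1 b2 \<subseteq> \<Union> (orb ` T b1 b2)"
    proof
      fix x assume x: "x \<in> T b1 b2"
      then have "x \<in> orb x" using orb_self unfolding T_def by auto
      then show "x \<in> \<Union> (orb ` T b1 b2)" using x by blast
    qed
  qed
  have "c * card (orb ` T b1 b2) = card (\<Union> (orb ` T b1 b2))"
  proof (rule card_partition)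
    show "finite (orb ` T b1 b2)" using fin by simp
    show "finite (\<Union> (orb ` T b1 b2))" using fin U by simp
    show "\<And>C. C \<in> orb ` T b1 b2 \<Longrightarrow> card C = c" using assms by blast
    show "\<And>c1 c2. c1 \<in> orb ` T b1 b2 \<Longrightarrow> c2 \<in> orb ` T b1 b2 \<Longrightarrow> c1 \<noteq> c2 \<Longrightarrow> c1 \<inter> c2 = {}"
    proof -
      fix c1 c2 assume "c1 \<in> orb ` T b1 b2" "c2 \<in> orb ` T b1 b2" "c1 \<noteq> c2"
      then obtain a b where ab: "a \<in> T b1 b2" "b \<in> T b1 b2" "c1 = orb a" "c2 = orb b" "orb a \<noteq> orb b" by blast
      show "c1 \<inter> c2 = {}"
      proof (rule ccontr)
        assume "c1 \<inter> c2 \<noteq> {}"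
        then obtain z where "z \<in> orb a" "z \<in> orb b" using ab by blast
        then show False using orb_eq[of a z] orb_eq[of b z] ab unfolding T_def by auto
      qed
    qed
  qed
  then show ?thesis using U by simp
qed

lemma crt: "\<exists>x. 0 \<le> x \<and> x < P * Q \<and> [x = u] (mod P) \<and> [x = v] (mod Q)"
proof -
  obtain y where y: "[y = u] (mod P)" "[y = v] (mod Q)" using binary_chinese_remainder_int[OF copPQ] by blast
  have "[y mod (P * Q) = y] (mod P)" "[y mod (P * Q) = y] (mod Q)"
    using congN[of "y mod (P*Q)" y] by (auto simp: cong_def)
  then show ?thesis using y N1 by (intro exI[of _ "y mod (P * Q)"]) (auto intro: cong_trans)
qed

lemma T00: "T True True = {0}"
proof -
  have "x = 0" if "x \<in> T True True" for x
  proof -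
    have "P * Q dvd x" using that copPQ unfolding T_def by (auto intro: divides_mult)
    moreover have "0 \<le> x" "x < P * Q" using that unfolding T_def by auto
    ultimately show ?thesis by (metis mod_pos_pos_trivial dvd_imp_mod_0)
  qed
  then show ?thesis using N1 unfolding T_def by auto
qed

lemma card_T10: "card (T False True) = p1 - 1"
proof -
  have "card (T False True) = card {1..<P}"
  proof (rule card_eq_rel[where R = "\<lambda>x u. [x = u] (mod P)"])
    show "finite {1..<P}" by simp
    fix x assume x: "x \<in> T False True"
    show "\<exists>!u. u \<in> {1..<P} \<and> [x = u] (mod P)"
    proof
      have "x mod P \<noteq> 0" using x unfolding T_def by auto
      moreover have "x mod P \<ge> 0" using P1 by simp
      ultimately have "x mod P \<ge> 1" by linarith
      then show "x mod P \<in> {1..<P} \<and> [x = x mod P] (mod P)" using P1 by (auto simp: cong_def)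
      fix u assume "u \<in> {1..<P} \<and> [x = u] (mod P)"
      then show "u = x mod P" by (simp add: cong_def)
    qed
  next
    fix u assume u: "u \<in> {1..<P}"
    obtain x where x: "0 \<le> x" "x < P * Q" "[x = u] (mod P)" "[x = 0] (mod Q)" using crt by blast
    have "\<not> P dvd x"
    proof
      assume "P dvd x"
      then have "[u = 0] (mod P)" using x(3) by (meson cong_0_iff cong_sym cong_trans)
      then show False using u by (auto simp: cong_0_iff zdvd_not_zless)
    qed
    then have xT: "x \<in> T False True" using x unfolding T_def by (auto simp: cong_0_iff)
    show "\<exists>!x. x \<in> T False True \<and> [x = u] (mod P)"
    proof
      show "x \<in> T False True \<and> [x = u] (mod P)" using xT x by blast
      fix y assume y: "y \<in> T False True \<and> [y = u] (mod P)"
      show "y = x"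
      proof (rule eq_mod_N)
        show "[y = x] (mod P)" using y x by (meson cong_sym cong_trans)
        have "Q dvd y" using y unfolding T_def by auto
        then have "[y = 0] (mod Q)" by (simp add: cong_0_iff)
        then show "[y = x] (mod Q)" using x(4) by (meson cong_sym cong_trans)
      qed (use y x in \<open>auto simp: T_def\<close>)
    qed
  qed
  moreover have "card {1..<P} = p1 - 1" by simp
  ultimately show ?thesis by simp
qed

end

context zd begin

sublocale swap: zd p2 p1 s2 s1 t2 t1 g2 g1 e
  using p1 p2 neq s1 t1 st1 s2 t2 st2 r1 r2 c1 c2 by unfold_locales auto

lemma T_swap: "swap.T b1 b2 = T b2 b1"
  unfolding T_def swap.T_def by (auto simp: mult.commute)

lemma card_T01: "card (T True False) = p2 - 1"
  using swap.card_T10 T_swap by simp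

lemma T_disj: "(b1, b2) \<noteq> (c1, c2) \<Longrightarrow> T b1 b2 \<inter> T c1 c2 = {}"
  unfolding T_def by auto

lemma T_all: "{0..<P * Q} = T True True \<union> T False True \<union> T True False \<union> T False False"
  unfolding T_def by auto

lemma finT: "finite (T b1 b2)"
  unfolding T_def by (rule finite_subset[of _ "{0..<P*Q}"]) auto

lemma card_T11: "card (T False False) = (p1 - 1) * (p2 - 1)"
proof -
  have "card {0..<P * Q} = card (T True True) + card (T False True) + card (T True False) + card (T False False)"
    unfolding T_all
    by (subst card_Un_disjoint, simp_all add: finT T_disj Int_Un_distrib2)+
  moreover have "card {0..<P * Q} = p1 * p2" by (simp add: nat_mult_distrib)
  ultimately have "p1 * p2 = 1 + (p1 - 1) + (p2 - 1) + card (T False False)"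
    using T00 card_T10 card_T01 by simp
  moreover have "p1 \<ge> 1" "p2 \<ge> 1" using P1 Q1 by auto
  ultimately show ?thesis by (simp add: algebra_simps diff_mult_distrib diff_mult_distrib2)
qed

lemma orbT_disj: "(b1, b2) \<noteq> (c1, c2) \<Longrightarrow> orb ` T b1 b2 \<inter> orb ` T c1 c2 = {}"
proof (rule ccontr)
  assume ne: "(b1, b2) \<noteq> (c1, c2)" and "orb ` T b1 b2 \<inter> orb ` T c1 c2 \<noteq> {}"
  then obtain x y where xy: "x \<in> T b1 b2" "y \<in> T c1 c2" "orb x = orb y" by blast
  then have "x \<in> orb y" using orb_self unfolding T_def by auto
  then have "x \<in> T c1 c2" using T_closed xy(2) by blast
  then show False using xy(1) T_disj[OF ne] by blast
qed

lemma orbsize_10: "x \<in> T False True \<Longrightarrow> card (orb x) = s1"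
  by (rule orb_card[OF s1]) (auto simp: orb_cong T_def)
lemma orbsize_01: "x \<in> T True False \<Longrightarrow> card (orb x) = s2"
  by (rule orb_card[OF s2]) (auto simp: orb_cong T_def)
lemma orbsize_11: "x \<in> T False False \<Longrightarrow> card (orb x) = L"
  by (rule orb_card[OF L0]) (auto simp: orb_cong T_def lcm_cong)

lemma card_family: "card (orb ` {0..<P * Q}) = 1 + t1 + t2 + gcd s1 s2 * t1 * t2"
proof -
  have c00: "card (orb ` T True True) = 1" using T00 by simp
  have "s1 * card (orb ` T False True) = s1 * t1"
    using count_orbits[of False True s1] orbsize_10 card_T10 st1 by simp
  then have c10: "card (orb ` T False True) = t1" using s1 by simp
  have "s2 * card (orb ` T True False) = s2 * t2"
    using count_orbits[of True False s2] orbsize_01 card_T01 st2 by simp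
  then have c01: "card (orb ` T True False) = t2" using s2 by simp
  have "L * card (orb ` T False False) = (p1 - 1) * (p2 - 1)"
    using count_orbits[of False False L] orbsize_11 card_T11 by simp
  also have "\<dots> = L * (gcd s1 s2 * t1 * t2)"
    unfolding st1[symmetric] st2[symmetric] L_def
    by (metis (no_types, lifting) mult.assoc mult.left_commute prod_gcd_lcm_nat)
  finally have c11: "card (orb ` T False False) = gcd s1 s2 * t1 * t2" using L0 by simp
  have "orb ` {0..<P * Q} = orb ` T True True \<union> orb ` T False True \<union> orb ` T True False \<union> orb ` T False False"
    unfolding T_all by auto
  then have "card (orb ` {0..<P * Q}) = card (orb ` T True True) + card (orb ` T False True) + card (orb ` T True False) + card (orb ` T False False)"
    by (simp only:, subst card_Un_disjoint, simp_all add: finT orbT_disj Int_Un_distrib2)+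
  then show ?thesis using c00 c10 c01 c11 by simp
qed

end

context zd begin

definition "V a = {x \<in> {0..<P * Q}. \<exists>k. [x * (e ^ k - 1) = a] (mod P * Q)}"

lemma cong_cancel_P:
  assumes "\<not> P dvd x" "[x * (A - 1) = x * (B - 1)] (mod P)" shows "[A = B] (mod P)"
proof -
  have "[A - 1 = B - 1] (mod P)" using assms cancelP by blast
  then have "[A - 1 + 1 = B - 1 + 1] (mod P)" by (rule cong_add) simp
  then show ?thesis by simp
qed

lemma cong_cancel_Q:
  assumes "\<not> Q dvd x" "[x * (A - 1) = x * (B - 1)] (mod Q)" shows "[A = B] (mod Q)"
proof -
  have "[A - 1 = B - 1] (mod Q)" using assms cancelQ by blast
  then have "[A - 1 + 1 = B - 1 + 1] (mod Q)" by (rule cong_add) simp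
  then show ?thesis by simp
qed

lemma cong_ex_pow: "[A = B] (mod M) \<Longrightarrow> [x * (A - 1) = x * (B - 1)] (mod M)" for M :: int
  by (intro cong_scalar_left cong_diff) auto

lemma dvd_from_cong: "[x * y = a] (mod M) \<Longrightarrow> M dvd x \<Longrightarrow> M dvd a" for M :: int
  by (metis cong_dvd_iff dvd_mult2)

lemma dvd_from_cong0: "[x * (A - 1) = a] (mod M) \<Longrightarrow> [A = 1] (mod M) \<Longrightarrow> M dvd a" for M :: int
proof -
  assume a: "[x * (A - 1) = a] (mod M)" and b: "[A = 1] (mod M)"
  have "[x * (A - 1) = x * (1 - 1)] (mod M)" using cong_ex_pow[OF b] .
  then have "[x * (A - 1) = 0] (mod M)" by simp
  then have "[a = 0] (mod M)" using a by (meson cong_sym cong_trans)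
  then show ?thesis by (simp add: cong_0_iff)
qed

lemma V_range: "x \<in> V a \<Longrightarrow> 0 \<le> x \<and> x < P * Q" unfolding V_def by auto

lemma finV: "finite (V a)" unfolding V_def by (rule finite_subset[of _ "{0..<P*Q}"]) auto

lemma coprime_PQ_of: "\<not> P dvd y \<Longrightarrow> \<not> Q dvd y \<Longrightarrow> coprime y (P * Q)"
  using primeP primeQ by (metis coprime_commute coprime_mult_right_iff prime_imp_coprime)

lemma caseA_card:
  assumes aP: "\<not> P dvd a" and aQ: "\<not> Q dvd a"
  shows "card (V a) = card {k \<in> {..<L}. \<not> s1 dvd k \<and> \<not> s2 dvd k}"
proof (rule card_eq_rel[where R = "\<lambda>x k. [x * (e ^ k - 1) = a] (mod P * Q)"])
  show "finite {k \<in> {..<L}. \<not> s1 dvd k \<and> \<not> s2 dvd k}" by simp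
next
  fix x assume x: "x \<in> V a"
  then obtain k where k: "[x * (e ^ k - 1) = a] (mod P * Q)" unfolding V_def by blast
  have xP: "\<not> P dvd x" using k aP congN dvd_from_cong by blast
  have xQ: "\<not> Q dvd x" using k aQ congN dvd_from_cong by blast
  define k' where "k' = k mod L"
  have "[e ^ k = e ^ k'] (mod P * Q)" unfolding EN k'_def by (simp add: cong_def)
  then have k'R: "[x * (e ^ k' - 1) = a] (mod P * Q)" using k cong_ex_pow by (meson cong_sym cong_trans)
  have "\<not> s1 dvd k'"
  proof
    assume "s1 dvd k'" then have "[e ^ k' = 1] (mod P)" using E1one by blast
    then show False using dvd_from_cong0 k'R congN aP by blast
  qed
  moreover have "\<not> s2 dvd k'"
  proof
    assume "s2 dvd k'" then have "[e ^ k' = 1] (mod Q)" using E2one by blast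
    then show False using dvd_from_cong0 k'R congN aQ by blast
  qed
  moreover have "k' < L" unfolding k'_def using L0 by simp
  ultimately have k'K: "k' \<in> {k \<in> {..<L}. \<not> s1 dvd k \<and> \<not> s2 dvd k}" by simp
  show "\<exists>!k. k \<in> {k \<in> {..<L}. \<not> s1 dvd k \<and> \<not> s2 dvd k} \<and> [x * (e ^ k - 1) = a] (mod P * Q)"
  proof (rule ex1I[of _ k'])
    show "k' \<in> {k \<in> {..<L}. \<not> s1 dvd k \<and> \<not> s2 dvd k} \<and> [x * (e ^ k' - 1) = a] (mod P * Q)"
      using k'K k'R by blast
    fix j assume j: "j \<in> {k \<in> {..<L}. \<not> s1 dvd k \<and> \<not> s2 dvd k} \<and> [x * (e ^ j - 1) = a] (mod P * Q)"
    then have "[x * (e ^ j - 1) = x * (e ^ k' - 1)] (mod P * Q)" using k'R by (meson cong_sym cong_trans)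
    then have "[e ^ j = e ^ k'] (mod P)" "[e ^ j = e ^ k'] (mod Q)"
      using congN cong_cancel_P[OF xP] cong_cancel_Q[OF xQ] by blast+
    then have "[j = k'] (mod L)" using congN EN by blast
    then show "j = k'" using j k'K by (simp add: cong_def)
  qed
next
  fix k assume k: "k \<in> {k \<in> {..<L}. \<not> s1 dvd k \<and> \<not> s2 dvd k}"
  have "\<not> P dvd e ^ k - 1"
  proof
    assume "P dvd e ^ k - 1" then have "[e ^ k = 1] (mod P)" by (simp add: cong_iff_dvd_diff)
    then show False using k E1one by blast
  qed
  moreover have "\<not> Q dvd e ^ k - 1"
  proof
    assume "Q dvd e ^ k - 1" then have "[e ^ k = 1] (mod Q)" by (simp add: cong_iff_dvd_diff)
    then show False using k E2one by blast
  qed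
  ultimately have cop: "coprime (e ^ k - 1) (P * Q)" using coprime_PQ_of by blast
  obtain y where y: "[y * (e ^ k - 1) = a] (mod P * Q)" using solve_coprime[OF cop] by blast
  define x where "x = y mod (P * Q)"
  have xR: "[x * (e ^ k - 1) = a] (mod P * Q)" unfolding x_def using y
    by (metis cong_def mod_mult_left_eq)
  have xV: "x \<in> V a" unfolding V_def x_def using xR N1 x_def by auto
  show "\<exists>!x. x \<in> V a \<and> [x * (e ^ k - 1) = a] (mod P * Q)"
  proof (rule ex1I[of _ x])
    show "x \<in> V a \<and> [x * (e ^ k - 1) = a] (mod P * Q)" using xV xR by blast
    fix z assume z: "z \<in> V a \<and> [z * (e ^ k - 1) = a] (mod P * Q)"
    then have "[z * (e ^ k - 1) = x * (e ^ k - 1)] (mod P * Q)" using xR by (meson cong_sym cong_trans)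
    then have "[z = x] (mod P * Q)" using cong_mult_rcancel[OF cop] by blast
    then show "z = x" using z xV V_range cong_less_imp_eq_int by blast
  qed
qed

end

lemma card_mults: assumes "s > 0" "s dvd M"
  shows "card {k \<in> {..<M}. s dvd k} = M div s"
proof -
  obtain m where M: "M = s * m" using assms by blast
  have "{k \<in> {..<M}. s dvd k} = (\<lambda>i. s * i) ` {..<m}"
    using assms(1) by (auto simp: M)
  moreover have "inj_on (\<lambda>i. s * i) {..<m}" using assms(1) by (auto simp: inj_on_def)
  ultimately show ?thesis using assms(1) by (simp add: card_image M)
qed

context zd begin

lemma dec: obtains u w where "s1 = gcd s1 s2 * u" "s2 = gcd s1 s2 * w" "L = gcd s1 s2 * u * w"
    "coprime u w" "u > 0" "w > 0" "gcd s1 s2 > 0"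
proof -
  define d where "d = gcd s1 s2"
  have d0: "d > 0" using s1 unfolding d_def by simp
  obtain u where u: "s1 = d * u" unfolding d_def by (meson dvd_def gcd_dvd1)
  obtain w where w: "s2 = d * w" unfolding d_def by (meson dvd_def gcd_dvd2)
  have "d * L = s1 * s2" unfolding d_def L_def using prod_gcd_lcm_nat by simp
  then have "d * L = d * (d * u * w)" using u w by (simp add: ac_simps)
  then have L: "L = d * u * w" using d0 by simp
  have "s1 div d = u" "s2 div d = w" using d0 u w by simp_all
  then have "coprime u w" using div_gcd_coprime[of s1 s2] s1 unfolding d_def by simp
  moreover have "u > 0" "w > 0" using u w s1 s2 by auto
  ultimately show ?thesis using that u w L d0 unfolding d_def by blast
qed

lemma caseA:
  assumes aP: "\<not> P dvd a" and aQ: "\<not> Q dvd a"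
  shows "int (card (V a)) = (int s1 * int s2 - int s1 - int s2) div int (gcd s1 s2) + 1"
proof -
  obtain u w where uw: "s1 = gcd s1 s2 * u" "s2 = gcd s1 s2 * w" "L = gcd s1 s2 * u * w"
    "u > 0" "w > 0" "gcd s1 s2 > 0" using dec by blast
  define d where "d = gcd s1 s2"
  have d0: "d > 0" using uw d_def by simp
  define A1 where "A1 = {k \<in> {..<L}. s1 dvd k}"
  define A2 where "A2 = {k \<in> {..<L}. s2 dvd k}"
  have L1: "L = s1 * w" "L = s2 * u" using uw(3) by (subst uw(1), simp add: ac_simps, subst uw(2), simp add: ac_simps)
  have cA1: "card A1 = w" unfolding A1_def
    using card_mults[of s1 L] s1 L1(1) by simp
  have cA2: "card A2 = u" unfolding A2_def
    using card_mults[of s2 L] s2 L1(2) by (simp del: L1(1))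
  have "A1 \<inter> A2 = {k \<in> {..<L}. L dvd k}" unfolding A1_def A2_def L_def by auto
  then have cA12: "card (A1 \<inter> A2) = 1" using card_mults[of L L] L0 by simp
  have "card (A1 \<union> A2) + card (A1 \<inter> A2) = card A1 + card A2"
  proof -
    have "finite A1" "finite A2" by (auto simp: A1_def A2_def)
    then show ?thesis using card_Un_Int[of A1 A2] by simp
  qed
  then have cU: "card (A1 \<union> A2) + 1 = w + u" using cA1 cA2 cA12 by simp
  have K: "{k \<in> {..<L}. \<not> s1 dvd k \<and> \<not> s2 dvd k} = {..<L} - (A1 \<union> A2)"
    unfolding A1_def A2_def by auto
  have sub: "A1 \<union> A2 \<subseteq> {..<L}" by (auto simp: A1_def A2_def)
  have finU: "finite (A1 \<union> A2)" by (auto simp: A1_def A2_def)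
  have cD: "card ({..<L} - (A1 \<union> A2)) = L - card (A1 \<union> A2)"
    using card_Diff_subset[OF finU sub] by simp
  have "card (A1 \<union> A2) \<le> L" using card_mono[OF _ sub] by simp
  then have cK: "int (card {k \<in> {..<L}. \<not> s1 dvd k \<and> \<not> s2 dvd k}) = int L - int w - int u + 1"
    unfolding K cD using cU by linarith
  have i1: "int s1 = int d * int u" using uw(1) unfolding d_def by (metis of_nat_mult)
  have i2: "int s2 = int d * int w" using uw(2) unfolding d_def by (metis of_nat_mult)
  have iL: "int L = int d * int u * int w" using uw(3) unfolding d_def by (metis of_nat_mult)
  have "int s1 * int s2 - int s1 - int s2 = int d * (int d * int u * int w - int u - int w)"
    unfolding i1 i2 by (simp add: algebra_simps)
  then have "(int s1 * int s2 - int s1 - int s2) div int d = int d * int u * int w - int u - int w"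
    using d0 by simp
  then show ?thesis using caseA_card[OF aP aQ] cK iL unfolding d_def by simp
qed

end

context zd begin

lemma jc: "[e ^ (s1 * j) = e ^ (s1 * j')] (mod Q) \<longleftrightarrow> [j = j'] (mod (s2 div gcd s1 s2))"
proof -
  obtain u w where uw: "s1 = gcd s1 s2 * u" "s2 = gcd s1 s2 * w"
    "coprime u w" "gcd s1 s2 > 0" using dec by blast
  define d where "d = gcd s1 s2"
  have u: "s1 = d * u" and w: "s2 = d * w" and d0: "d > 0" using uw d_def by auto
  have "s2 div d = w" using w d0 by simp
  then have c: "s2 div gcd s1 s2 = w" unfolding d_def .
  have "[e ^ (s1 * j) = e ^ (s1 * j')] (mod Q) \<longleftrightarrow> [s1 * j = s1 * j'] (mod s2)" by (rule E2)
  also have "\<dots> \<longleftrightarrow> [d * (u * j) = d * (u * j')] (mod d * w)" by (simp add: u w ac_simps)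
  also have "\<dots> \<longleftrightarrow> [u * j = u * j'] (mod w)" unfolding cong_def using d0 by (simp add: mod_mult_mult1)
  also have "\<dots> \<longleftrightarrow> [j = j'] (mod w)" using uw(3) by (rule cong_mult_lcancel_nat)
  finally show ?thesis unfolding c .
qed

lemma c_pos: "s2 div gcd s1 s2 > 0"
proof -
  obtain u w where uw: "s1 = gcd s1 s2 * u" "s2 = gcd s1 s2 * w" "w > 0" "gcd s1 s2 > 0" using dec by blast
  define d where "d = gcd s1 s2"
  have "s2 = d * w" "d > 0" using uw d_def by auto
  then have "s2 div d = w" by simp
  then show ?thesis using uw(3) unfolding d_def by simp
qed

lemma caseB_V0:
  assumes aP: "P dvd a" and aQ: "\<not> Q dvd a"
  shows "card {x \<in> V a. P dvd x} = card {1..<s2}"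
proof (rule card_eq_rel[where R = "\<lambda>x k. [x * (e ^ k - 1) = a] (mod P * Q)"])
  show "finite {1..<s2}" by simp
next
  fix x assume x: "x \<in> {x \<in> V a. P dvd x}"
  then obtain k where k: "[x * (e ^ k - 1) = a] (mod P * Q)" unfolding V_def by blast
  have xP: "P dvd x" using x by blast
  have xQ: "\<not> Q dvd x" using k aQ congN dvd_from_cong by blast
  define k' where "k' = k mod s2"
  have "[e ^ k = e ^ k'] (mod Q)" unfolding E2 k'_def by (simp add: cong_def)
  then have "[x * (e ^ k' - 1) = a] (mod Q)" using k congN cong_ex_pow by (meson cong_sym cong_trans)
  moreover have "[x * (e ^ k' - 1) = a] (mod P)"
    using xP aP by (simp add: cong_iff_dvd_diff)
  ultimately have k'R: "[x * (e ^ k' - 1) = a] (mod P * Q)" using congN by blast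
  have "k' \<noteq> 0"
  proof
    assume "k' = 0"
    then have "[e ^ k' = 1] (mod Q)" by simp
    then show False using dvd_from_cong0 k'R congN aQ by blast
  qed
  moreover have "k' < s2" unfolding k'_def using s2 by simp
  ultimately have k'K: "k' \<in> {1..<s2}" by simp
  show "\<exists>!k. k \<in> {1..<s2} \<and> [x * (e ^ k - 1) = a] (mod P * Q)"
  proof (rule ex1I[of _ k'])
    show "k' \<in> {1..<s2} \<and> [x * (e ^ k' - 1) = a] (mod P * Q)" using k'K k'R by blast
    fix j assume j: "j \<in> {1..<s2} \<and> [x * (e ^ j - 1) = a] (mod P * Q)"
    then have "[x * (e ^ j - 1) = x * (e ^ k' - 1)] (mod P * Q)" using k'R by (meson cong_sym cong_trans)
    then have "[e ^ j = e ^ k'] (mod Q)"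
      using congN cong_cancel_Q[OF xQ] by blast
    then have "[j = k'] (mod s2)" using E2 by blast
    then show "j = k'" using j k'K by (simp add: cong_def)
  qed
next
  fix k assume k: "k \<in> {1..<s2}"
  have "\<not> Q dvd e ^ k - 1"
  proof
    assume "Q dvd e ^ k - 1" then have "[e ^ k = 1] (mod Q)" by (simp add: cong_iff_dvd_diff)
    then have "s2 dvd k" using E2one by blast
    then show False using k by (auto dest: dvd_imp_le)
  qed
  then have cop: "coprime (e ^ k - 1) Q" using primeQ by (metis coprime_commute prime_imp_coprime)
  obtain y where y: "[y * (e ^ k - 1) = a] (mod Q)" using solve_coprime[OF cop] by blast
  obtain x where x: "0 \<le> x" "x < P * Q" "[x = 0] (mod P)" "[x = y] (mod Q)" using crt by blast
  have xP: "P dvd x" using x(3) by (simp add: cong_0_iff)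
  have "[x * (e ^ k - 1) = a] (mod Q)" using y x(4) by (meson cong_scalar_right cong_trans)
  moreover have "[x * (e ^ k - 1) = a] (mod P)" using xP aP by (simp add: cong_iff_dvd_diff)
  ultimately have xR: "[x * (e ^ k - 1) = a] (mod P * Q)" using congN by blast
  have xV: "x \<in> {x \<in> V a. P dvd x}" unfolding V_def using xR x xP by auto
  show "\<exists>!x. x \<in> {x \<in> V a. P dvd x} \<and> [x * (e ^ k - 1) = a] (mod P * Q)"
  proof (rule ex1I[of _ x])
    show "x \<in> {x \<in> V a. P dvd x} \<and> [x * (e ^ k - 1) = a] (mod P * Q)" using xV xR by blast
    fix z assume z: "z \<in> {x \<in> V a. P dvd x} \<and> [z * (e ^ k - 1) = a] (mod P * Q)"
    then have "[z * (e ^ k - 1) = x * (e ^ k - 1)] (mod P * Q)" using xR by (meson cong_sym cong_trans)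
    then have "[z = x] (mod Q)" using cong_mult_rcancel[OF cop] congN by blast
    moreover have "[z = x] (mod P)" using z xP by (simp add: cong_iff_dvd_diff)
    ultimately show "z = x" using z xV V_range eq_mod_N by blast
  qed
qed

lemma caseB_V1:
  assumes aP: "P dvd a" and aQ: "\<not> Q dvd a"
  shows "card {x \<in> V a. \<not> P dvd x} = card ({1..<P} \<times> {1..<s2 div gcd s1 s2})"
proof (rule card_eq_rel[where R = "\<lambda>x uj. [x = fst uj] (mod P) \<and> [x * (e ^ (s1 * snd uj) - 1) = a] (mod P * Q)"])
  show "finite ({1..<P} \<times> {1..<s2 div gcd s1 s2})" by simp
next
  fix x assume x: "x \<in> {x \<in> V a. \<not> P dvd x}"
  then obtain k where k: "[x * (e ^ k - 1) = a] (mod P * Q)" unfolding V_def by blast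
  have xP: "\<not> P dvd x" using x by blast
  have xQ: "\<not> Q dvd x" using k aQ congN dvd_from_cong by blast
  have kP: "[x * (e ^ k - 1) = a] (mod P)" using k congN by blast
  have "[a = 0] (mod P)" using aP by (simp add: cong_0_iff)
  then have "[x * (e ^ k - 1) = x * (1 - 1)] (mod P)" using kP by simp (meson cong_trans)
  then have "[e ^ k = 1] (mod P)" using cong_cancel_P[OF xP] by blast
  then have "s1 dvd k" using E1one by blast
  then obtain j where j: "k = s1 * j" by blast
  define j' where "j' = j mod (s2 div gcd s1 s2)"
  have "[e ^ k = e ^ (s1 * j')] (mod Q)" unfolding j jc j'_def by (simp add: cong_def)
  then have "[x * (e ^ (s1 * j') - 1) = a] (mod Q)" using k congN cong_ex_pow by (meson cong_sym cong_trans)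
  moreover have "[x * (e ^ (s1 * j') - 1) = a] (mod P)"
  proof -
    have "[e ^ (s1 * j') = 1] (mod P)" using E1one by simp
    then have "[x * (e ^ (s1 * j') - 1) = x * (1 - 1)] (mod P)" by (rule cong_ex_pow)
    then show ?thesis using aP by (simp add: cong_0_iff cong_iff_dvd_diff)
  qed
  ultimately have jR: "[x * (e ^ (s1 * j') - 1) = a] (mod P * Q)" using congN by blast
  have "j' \<noteq> 0"
  proof
    assume "j' = 0"
    then have "[e ^ (s1 * j') = 1] (mod Q)" by simp
    then show False using dvd_from_cong0 jR congN aQ by blast
  qed
  moreover have "j' < s2 div gcd s1 s2" unfolding j'_def using c_pos by simp
  ultimately have j'K: "j' \<in> {1..<s2 div gcd s1 s2}" by simp
  define u where "u = x mod P"
  have "u \<noteq> 0" using xP unfolding u_def by auto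
  moreover have "u \<ge> 0" "u < P" unfolding u_def using P1 by auto
  ultimately have uK: "u \<in> {1..<P}" by simp
  have uR: "[x = u] (mod P)" unfolding u_def by (simp add: cong_def)
  show "\<exists>!uj. uj \<in> {1..<P} \<times> {1..<s2 div gcd s1 s2} \<and>
       [x = fst uj] (mod P) \<and> [x * (e ^ (s1 * snd uj) - 1) = a] (mod P * Q)"
  proof (rule ex1I[of _ "(u, j')"])
    show "(u, j') \<in> {1..<P} \<times> {1..<s2 div gcd s1 s2} \<and>
       [x = fst (u, j')] (mod P) \<and> [x * (e ^ (s1 * snd (u, j')) - 1) = a] (mod P * Q)"
      using uK j'K uR jR by simp
    fix uj assume uj: "uj \<in> {1..<P} \<times> {1..<s2 div gcd s1 s2} \<and>
       [x = fst uj] (mod P) \<and> [x * (e ^ (s1 * snd uj) - 1) = a] (mod P * Q)"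
    obtain u2 j2 where uj2: "uj = (u2, j2)" by (cases uj)
    have "[u2 = u] (mod P)" using uj uR unfolding uj2 by simp (meson cong_sym cong_trans)
    moreover have "0 \<le> u2" "u2 < P" "0 \<le> u" "u < P" using uj uK unfolding uj2 by auto
    ultimately have "u2 = u" using cong_less_imp_eq_int by blast
    moreover
    have "[x * (e ^ (s1 * j2) - 1) = x * (e ^ (s1 * j') - 1)] (mod P * Q)" using uj jR unfolding uj2
      by simp (meson cong_sym cong_trans)
    then have "[e ^ (s1 * j2) = e ^ (s1 * j')] (mod Q)"
      using congN cong_cancel_Q[OF xQ] by blast
    then have "[j2 = j'] (mod s2 div gcd s1 s2)" using jc by blast
    then have "j2 = j'" using uj j'K unfolding uj2 by (simp add: cong_def)
    ultimately show "uj = (u, j')" using uj2 by simp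
  qed
next
  fix uj assume uj: "uj \<in> {1..<P} \<times> {1..<s2 div gcd s1 s2}"
  obtain u j where uj2: "uj = (u, j)" by (cases uj)
  have u: "1 \<le> u" "u < P" and j: "1 \<le> j" "j < s2 div gcd s1 s2" using uj unfolding uj2 by auto
  have "\<not> Q dvd e ^ (s1 * j) - 1"
  proof
    assume "Q dvd e ^ (s1 * j) - 1" then have "[e ^ (s1 * j) = e ^ (s1 * 0)] (mod Q)" by (simp add: cong_iff_dvd_diff)
    then have "[j = 0] (mod s2 div gcd s1 s2)" using jc by blast
    then show False using j by (simp add: cong_def)
  qed
  then have cop: "coprime (e ^ (s1 * j) - 1) Q" using primeQ by (metis coprime_commute prime_imp_coprime)
  obtain y where y: "[y * (e ^ (s1 * j) - 1) = a] (mod Q)" using solve_coprime[OF cop] by blast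
  obtain x where x: "0 \<le> x" "x < P * Q" "[x = u] (mod P)" "[x = y] (mod Q)" using crt by blast
  have xP: "\<not> P dvd x"
  proof
    assume "P dvd x"
    then have "[u = 0] (mod P)" using x(3) by (meson cong_0_iff cong_sym cong_trans)
    then show False using u by (auto simp: cong_0_iff zdvd_not_zless)
  qed
  have "[x * (e ^ (s1 * j) - 1) = a] (mod Q)" using y x(4) by (meson cong_scalar_right cong_trans)
  moreover have "[x * (e ^ (s1 * j) - 1) = a] (mod P)"
  proof -
    have "[e ^ (s1 * j) = 1] (mod P)" using E1one by simp
    then have "[x * (e ^ (s1 * j) - 1) = x * (1 - 1)] (mod P)" by (rule cong_ex_pow)
    then show ?thesis using aP by (simp add: cong_0_iff cong_iff_dvd_diff)
  qed
  ultimately have xR: "[x * (e ^ (s1 * j) - 1) = a] (mod P * Q)" using congN by blast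
  have xV: "x \<in> {x \<in> V a. \<not> P dvd x}" unfolding V_def using xR x xP by auto
  show "\<exists>!x. x \<in> {x \<in> V a. \<not> P dvd x} \<and> [x = fst uj] (mod P) \<and> [x * (e ^ (s1 * snd uj) - 1) = a] (mod P * Q)"
  proof (rule ex1I[of _ x])
    show "x \<in> {x \<in> V a. \<not> P dvd x} \<and> [x = fst uj] (mod P) \<and> [x * (e ^ (s1 * snd uj) - 1) = a] (mod P * Q)"
      using xV xR x(3) uj2 by simp
    fix z assume z: "z \<in> {x \<in> V a. \<not> P dvd x} \<and> [z = fst uj] (mod P) \<and> [z * (e ^ (s1 * snd uj) - 1) = a] (mod P * Q)"
    then have "[z * (e ^ (s1 * j) - 1) = x * (e ^ (s1 * j) - 1)] (mod P * Q)" using xR uj2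
      by simp (meson cong_sym cong_trans)
    then have "[z = x] (mod Q)" using cong_mult_rcancel[OF cop] congN by blast
    moreover have "[z = x] (mod P)" using z x(3) uj2 by simp (meson cong_sym cong_trans)
    ultimately show "z = x" using z xV V_range eq_mod_N by blast
  qed
qed

end

context zd begin

lemma caseB:
  assumes aP: "P dvd a" and aQ: "\<not> Q dvd a"
  shows "int (card (V a)) = ((int p1 - 1) * int s2) div int (gcd s1 s2) - int p1 + int s2"
proof -
  have "V a = {x \<in> V a. P dvd x} \<union> {x \<in> V a. \<not> P dvd x}" by auto
  then have "card (V a) = card {x \<in> V a. P dvd x} + card {x \<in> V a. \<not> P dvd x}"
    using finV[of a] by (metis (no_types, lifting) card_Un_disjoint disjoint_iff finite_Un mem_Collect_eq)
  also have "\<dots> = (s2 - 1) + (p1 - 1) * (s2 div gcd s1 s2 - 1)"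
  proof -
    have "nat (P - 1) = p1 - 1" by (simp add: nat_diff_distrib)
    then show ?thesis using caseB_V0[OF aP aQ] caseB_V1[OF aP aQ] by (simp add: card_cartesian_product)
  qed
  finally have cV: "card (V a) = (s2 - 1) + (p1 - 1) * (s2 div gcd s1 s2 - 1)" .
  obtain u w where uw: "s1 = gcd s1 s2 * u" "s2 = gcd s1 s2 * w" "w > 0" "gcd s1 s2 > 0" using dec by blast
  define d where "d = gcd s1 s2"
  have w: "s2 = d * w" and d0: "d > 0" using uw d_def by auto
  have c: "s2 div gcd s1 s2 = w" using w d0 unfolding d_def[symmetric] by simp
  have i2: "int s2 = int d * int w" using w by simp
  have "((int p1 - 1) * int s2) div int d = (int p1 - 1) * int w"
    unfolding i2 using d0 by (simp add: ac_simps)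
  moreover have "int (card (V a)) = int s2 - 1 + (int p1 - 1) * (int w - 1)"
    unfolding cV c using s2 uw(3) P1 by (simp add: of_nat_diff)
  ultimately show ?thesis unfolding d_def[symmetric] using i2 by (simp add: algebra_simps)
qed

lemma zd_swap: "zd p2 p1 s2 s1 t2 t1 g2 g1 e"
  using p1 p2 neq s1 t1 st1 s2 t2 st2 r1 r2 c1 c2 by unfold_locales auto

lemma V_swap: "zd.V p2 p1 e a = V a"
  unfolding zd.V_def[OF zd_swap, of a] V_def[of a] by (simp add: mult.commute)

lemma caseC:
  assumes aP: "\<not> P dvd a" and aQ: "Q dvd a"
  shows "int (card (V a)) = ((int p2 - 1) * int s1) div int (gcd s1 s2) - int p2 + int s1"
  using zd.caseB[OF zd_swap aQ aP] V_swap by (simp add: gcd.commute)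

lemma V_char:
  assumes x: "0 \<le> x" "x < P * Q"
  shows "((x + a) mod (P * Q) \<in> orb x) \<longleftrightarrow> (\<exists>k. [x * (e ^ k - 1) = a] (mod P * Q))"
proof -
  have "[x * (e ^ k - 1) = a] (mod P * Q) \<longleftrightarrow> (x + a) mod (P * Q) = (x * e ^ k) mod (P * Q)" for k
  proof -
    have "(x + a) mod (P * Q) = (x * e ^ k) mod (P * Q) \<longleftrightarrow> [x * e ^ k = x + a] (mod P * Q)"
      by (auto simp: cong_def)
    also have "\<dots> \<longleftrightarrow> [x * (e ^ k - 1) = a] (mod P * Q)"
      by (simp add: cong_iff_dvd_diff algebra_simps)
    finally show ?thesis by simp
  qed
  then show ?thesis unfolding in_orb by blast
qed

end

theorem theorem3p10:
  fixes p1 p2 s1 s2 t1 t2 g1 g2 :: nat and e :: int and h :: "int set \<Rightarrow> nat"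
  assumes "prime p1" and "prime p2" and "p1 \<noteq> p2"
    and "s1 > 0" and "t1 > 0" and "s1 * t1 = p1 - 1"
    and "s2 > 0" and "t2 > 0" and "s2 * t2 = p2 - 1"
    and "residue_primroot p1 g1" and "residue_primroot p2 g2"
    and "[e = int g1 ^ t1] (mod int p1)" and "[e = int g2 ^ t2] (mod int p2)"
    and "bij_betw h (coset_family (p1 * p2) (cyc_subgroup (p1 * p2) e))
                    {0..<card (coset_family (p1 * p2) (cyc_subgroup (p1 * p2) e))}"
  shows "let n = p1 * p2; G = cyc_subgroup n e; d = gcd s1 s2;
             a0 = (int s1 * int s2 - int s1 - int s2) div int d + 1;
             a1 = ((int p1 - 1) * int s2) div int d - int p1 + int s2;
             a2 = ((int p2 - 1) * int s1) div int d - int p2 + int s1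
         in zd_function n (coset_index_fn n G h) (1 + t1 + t2 + d * t1 * t2) {a0, a1, a2}"
proof -
  interpret zd p1 p2 s1 s2 t1 t2 g1 g2 e
    using assms by unfold_locales auto
  define F where "F = coset_family (p1 * p2) (cyc_subgroup (p1 * p2) e)"
  define f where "f = coset_index_fn (p1 * p2) (cyc_subgroup (p1 * p2) e) h"
  have inj: "inj_on h F" using assms(14) unfolding F_def by (rule bij_betw_imp_inj_on)
  have F: "F = orb ` {0..<P * Q}" unfolding F_def by (rule family_eq)
  have fx: "f x = h (orb x)" if "0 \<le> x" "x < P * Q" for x
    unfolding f_def using index_fn that by blast
  have N: "int (p1 * p2) = P * Q" by simp
  have part1: "card (f ` {0..<int (p1 * p2)}) = 1 + t1 + t2 + gcd s1 s2 * t1 * t2"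
  proof -
    have "f ` {0..<int (p1 * p2)} = h ` F" unfolding N F using fx by (auto simp: image_image)
    then have "card (f ` {0..<int (p1 * p2)}) = card F" using card_image[OF inj] by simp
    then show ?thesis using card_family F by simp
  qed
  have part2: "{x \<in> {0..<int (p1 * p2)}. f ((x + a) mod int (p1 * p2)) = f x} = V a" for a
  proof -
    have "f ((x + a) mod (P * Q)) = f x \<longleftrightarrow> (\<exists>k. [x * (e ^ k - 1) = a] (mod P * Q))"
      if x: "0 \<le> x" "x < P * Q" for x
    proof -
      define y where "y = (x + a) mod (P * Q)"
      have y: "0 \<le> y" "y < P * Q" unfolding y_def using N1 by auto
      have "f y = f x \<longleftrightarrow> h (orb y) = h (orb x)" using fx x y by simp
      also have "\<dots> \<longleftrightarrow> orb y = orb x"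
      proof -
        have "orb y \<in> F" "orb x \<in> F" using x y unfolding F by auto
        then show ?thesis using inj_on_eq_iff[OF inj] by blast
      qed
      also have "\<dots> \<longleftrightarrow> y \<in> orb x" using orb_eq_iff x y by blast
      also have "\<dots> \<longleftrightarrow> (\<exists>k. [x * (e ^ k - 1) = a] (mod P * Q))"
        unfolding y_def using V_char x by blast
      finally show ?thesis unfolding y_def .
    qed
    then show ?thesis unfolding V_def N by auto
  qed
  have part3: "int (card (V a)) \<in> {(int s1 * int s2 - int s1 - int s2) div int (gcd s1 s2) + 1,
      ((int p1 - 1) * int s2) div int (gcd s1 s2) - int p1 + int s2,
      ((int p2 - 1) * int s1) div int (gcd s1 s2) - int p2 + int s1}"
    if a: "a \<in> {1..<int (p1 * p2)}" for a
  proof -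
    have "\<not> (P dvd a \<and> Q dvd a)"
    proof
      assume "P dvd a \<and> Q dvd a"
      then have "P * Q dvd a" using copPQ by (auto intro: divides_mult)
      then show False using a N by (auto simp: zdvd_not_zless)
    qed
    then consider "\<not> P dvd a" "\<not> Q dvd a" | "P dvd a" "\<not> Q dvd a" | "\<not> P dvd a" "Q dvd a" by blast
    then show ?thesis
    proof cases
      case 1 then show ?thesis using caseA by simp
    next
      case 2 then show ?thesis using caseB by simp
    next
      case 3 then show ?thesis using caseC by simp
    qed
  qed
  show ?thesis
    unfolding Let_def zd_function_def f_def[symmetric]
    using part1 part2 part3 by simp
qed

end
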